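(* Let $m=2^ab$ with $a>0$ and $b$ odd. Then $$|M_1^m|=2^a\psi(b)=\Big[\Gamma_0(2):\Gamma_0(2)\cap\begin{bmatrix}1&0\\0&m\end{bmatrix}^{-1}\Gamma_0(2)^+\begin{bmatrix}1&0\\0&m\end{bmatrix}\Big].$$
   Context: For a positive integer $n$, $\psi(n)=n\prod_{p\mid n,\ p\text{ prime}}(1-\frac1p)$. Matrices are in $GL_2^+(\mathbb{R})$ considered up to sign; $\Gamma_0(2)=\{\begin{bmatrix}a&b\\c&d\end{bmatrix}\in SL_2(\mathbb{Z}): c\equiv0\pmod 2\}$, $w_2=2^{-1/2}\begin{bmatrix}0&-1\\2&0\end{bmatrix}$, $\Gamma_0(2)^+$ is the group generated by $\Gamma_0(2)$ and $w_2$. $M_1^m=\{\begin{bmatrix}x&y\\0&z\end{bmatrix}: x,y,z\in\mathbb{Z},\ x,z>0,\ xz=m,\ 0\leq y<z,\ \gcd(x,y,z)=1,\ x\text{ odd}\}$. *)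

theory Defs
  imports "HOL-Analysis.Analysis" "HOL-Computational_Algebra.Primes"
begin

definition dpsi :: "nat \<Rightarrow> real" where
  "dpsi n = real n * (\<Prod>p\<in>prime_factors n. (1 + 1 / real p))"

text \<open>The set M_1^m of upper triangular integer matrices, as triples (x,y,z).\<close>
definition M1 :: "nat \<Rightarrow> (int \<times> int \<times> int) set" where
  "M1 m = {(x, y, z). x > 0 \<and> z > 0 \<and> x * z = int m \<and> 0 \<le> y \<and> y < z
              \<and> gcd x (gcd y z) = 1 \<and> odd x}"

definition mat2 :: "real \<Rightarrow> real \<Rightarrow> real \<Rightarrow> real \<Rightarrow> real^2^2" where
  "mat2 a b c d = (\<chi> i j. if i = 1 then (if j = 1 then a else b)
                              else (if j = 1 then c else d))"

definition Gamma0_2 :: "(real^2^2) set" where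
  "Gamma0_2 = {A. (\<forall>i j. A$i$j \<in> \<int>) \<and> det A = 1 \<and> A$2$1 / 2 \<in> \<int>}"

definition w2 :: "real^2^2" where
  "w2 = (1 / sqrt 2) *\<^sub>R mat2 0 (-1) 2 0"

inductive_set Gamma0_2_plus :: "(real^2^2) set" where
  base: "A \<in> Gamma0_2 \<Longrightarrow> A \<in> Gamma0_2_plus"
| gen: "w2 \<in> Gamma0_2_plus"
| mult: "A \<in> Gamma0_2_plus \<Longrightarrow> B \<in> Gamma0_2_plus \<Longrightarrow> A ** B \<in> Gamma0_2_plus"
| inv: "A \<in> Gamma0_2_plus \<Longrightarrow> matrix_inv A \<in> Gamma0_2_plus"

definition subgroup_index :: "(real^2^2) set \<Rightarrow> (real^2^2) set \<Rightarrow> nat" where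
  "subgroup_index G H = card {(\<lambda>h. g ** h) ` H | g. g \<in> G}"

definition conj_by :: "real^2^2 \<Rightarrow> (real^2^2) set \<Rightarrow> (real^2^2) set" where
  "conj_by g S = (\<lambda>h. matrix_inv g ** h ** g) ` S"

end

theory Submission
  imports Defs "HOL-Number_Theory.Cong"
begin


lemma mat2_nth [simp]:
  "mat2 a b c d $ 1 $ 1 = a" "mat2 a b c d $ 1 $ 2 = b"
  "mat2 a b c d $ 2 $ 1 = c" "mat2 a b c d $ 2 $ 2 = d"
  by (simp_all add: mat2_def)

lemma mat2_eta: "A = mat2 (A$1$1) (A$1$2) (A$2$1) (A$2$2)"
  unfolding mat2_def by (simp add: vec_eq_iff forall_2)

lemma mat2_eq_iff: "mat2 a b c d = mat2 a' b' c' d' \<longleftrightarrow> a = a' \<and> b = b' \<and> c = c' \<and> d = d'"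
  by (metis mat2_nth)

lemma eq_mat2I: "A$1$1 = a \<Longrightarrow> A$1$2 = b \<Longrightarrow> A$2$1 = c \<Longrightarrow> A$2$2 = d \<Longrightarrow> A = mat2 a b c d"
  using mat2_eta[of A] by simp

lemma mat2_mult: "mat2 a b c d ** mat2 e f g h = mat2 (a*e+b*g) (a*f+b*h) (c*e+d*g) (c*f+d*h)"
  by (rule eq_mat2I) (simp_all add: matrix_matrix_mult_def sum_2)

lemma det_mat2 [simp]: "det (mat2 a b c d) = a*d - b*c"
  by (simp add: det_2)

lemma mat1_mat2: "mat 1 = mat2 1 0 0 1"
  by (subst mat2_eta) (simp add: mat_def)

lemma scaleR_mat2: "r *\<^sub>R mat2 a b c d = mat2 (r*a) (r*b) (r*c) (r*d)"
  by (rule eq_mat2I) simp_all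

lemma matrix_inv_mat2:
  assumes "a*d - b*c = 1"
  shows "matrix_inv (mat2 a b c d) = mat2 d (-b) (-c) a"
proof -
  let ?A = "mat2 a b c d" and ?B = "mat2 d (-b) (-c) a"
  have AB: "?A ** ?B = mat 1" "?B ** ?A = mat 1"
    using assms by (auto simp: mat2_mult mat1_mat2 mat2_eq_iff algebra_simps)
  have "?A ** matrix_inv ?A = mat 1 \<and> matrix_inv ?A ** ?A = mat 1"
    unfolding matrix_inv_def by (rule someI[of _ ?B]) (use AB in auto)
  then have "matrix_inv ?A = (?B ** ?A) ** matrix_inv ?A" using AB by (simp add: matrix_mul_lid)
  also have "\<dots> = ?B" using \<open>?A ** matrix_inv ?A = mat 1 \<and> _\<close>
    by (simp add: matrix_mul_assoc[symmetric] matrix_mul_rid)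
  finally show ?thesis .
qed



lemma two_sq_int: "2 * p^2 = (k::int)^2 \<Longrightarrow> p = 0"
proof (induction "nat \<bar>p\<bar>" arbitrary: p k rule: less_induct)
  case less
  show ?case
  proof (rule ccontr)
    assume p0: "p \<noteq> 0"
    have "even (k^2)" using less.prems by (metis dvd_triv_left)
    then have "even k" by simp
    then obtain k' where k': "k = 2*k'" by blast
    have "p^2 = 2*k'^2" using less.prems k' by (simp add: power2_eq_square)
    then have "even (p^2)" by simp
    then have "even p" by simp
    then obtain p' where p': "p = 2*p'" by blast
    have "2*p'^2 = k'^2" using \<open>p^2 = 2*k'^2\<close> p' by (simp add: power2_eq_square)
    moreover have "nat \<bar>p'\<bar> < nat \<bar>p\<bar>" using p' p0 by auto
    ultimately have "p' = 0" using less.hyps by blast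
    then show False using p' p0 by simp
  qed
qed

lemma sqrt2_int: "sqrt 2 * of_int p \<in> \<int> \<Longrightarrow> p = 0"
proof -
  assume "sqrt 2 * of_int p \<in> \<int>"
  then obtain k where k: "sqrt 2 * of_int p = of_int k" by (auto elim: Ints_cases)
  then have "(sqrt 2 * of_int p)^2 = (of_int k :: real)^2" by simp
  then have "real_of_int (2 * p^2) = of_int (k^2)" by (simp add: power_mult_distrib)
  then have "2 * p^2 = k^2" by (simp only: of_int_eq_iff)
  then show "p = 0" by (rule two_sq_int)
qed

lemma G_iff: "A \<in> Gamma0_2 \<longleftrightarrow> (\<exists>a b c d::int. A = mat2 (of_int a) (of_int b) (of_int c) (of_int d)
   \<and> a*d - b*c = 1 \<and> even c)"
proof
  assume A: "A \<in> Gamma0_2"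
  then have "\<forall>i j. A$i$j \<in> \<int>" "det A = 1" "A$2$1/2 \<in> \<int>" by (auto simp: Gamma0_2_def)
  then obtain a b c d where abcd: "A$1$1 = of_int a" "A$1$2 = of_int b" "A$2$1 = of_int c" "A$2$2 = of_int d"
    by (metis Ints_cases)
  obtain c' where "A$2$1/2 = of_int c'" using \<open>A$2$1/2 \<in> \<int>\<close> by (auto elim: Ints_cases)
  then have "c = 2*c'" using abcd by (simp add: field_simps)
  moreover have "real_of_int (a*d - b*c) = 1" using \<open>det A = 1\<close> abcd by (simp add: det_2)
  ultimately show "\<exists>a b c d::int. A = mat2 (of_int a) (of_int b) (of_int c) (of_int d)
   \<and> a*d - b*c = 1 \<and> even c" using mat2_eta[of A] abcd
    by (intro exI[of _ a] exI[of _ b] exI[of _ c] exI[of _ d]) (auto simp del: of_int_diff)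
next
  assume "\<exists>a b c d::int. A = mat2 (of_int a) (of_int b) (of_int c) (of_int d)
   \<and> a*d - b*c = 1 \<and> even c"
  then obtain a b c d :: int where A: "A = mat2 (of_int a) (of_int b) (of_int c) (of_int d)"
    and det: "a*d - b*c = 1" and ev: "even c" by blast
  have "real_of_int (a*d-b*c) = 1" using det by simp
  moreover obtain c' where "c = 2*c'" using ev by blast
  ultimately show "A \<in> Gamma0_2" unfolding Gamma0_2_def using A
    by (auto simp: forall_2)
qed

definition Wset :: "(real^2^2) set" where
  "Wset = {mat2 (sqrt 2 * of_int p) (of_int q / sqrt 2) (sqrt 2 * of_int r) (sqrt 2 * of_int t)
           | p q r t :: int. 2*p*t - q*r = 1}"

lemma s2: "sqrt 2 * sqrt 2 = (2::real)" by simp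

lemma GG: "A \<in> Gamma0_2 \<Longrightarrow> B \<in> Gamma0_2 \<Longrightarrow> A ** B \<in> Gamma0_2"
proof -
  assume "A \<in> Gamma0_2" "B \<in> Gamma0_2"
  then obtain a b c d a' b' c' d' :: int where
    A: "A = mat2 (of_int a) (of_int b) (of_int c) (of_int d)" "a*d - b*c = 1" "even c" and
    B: "B = mat2 (of_int a') (of_int b') (of_int c') (of_int d')" "a'*d' - b'*c' = 1" "even c'"
    unfolding G_iff by blast
  have "(a*a'+b*c')*(c*b'+d*d') - (a*b'+b*d')*(c*a'+d*c') = (a*d-b*c)*(a'*d'-b'*c')"
    by (simp add: algebra_simps)
  then show ?thesis unfolding G_iff using A B
    by (intro exI[of _ "a*a'+b*c'"] exI[of _ "a*b'+b*d'"] exI[of _ "c*a'+d*c'"] exI[of _ "c*b'+d*d'"])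
      (simp add: mat2_mult)
qed

lemma G_inv: "A \<in> Gamma0_2 \<Longrightarrow> matrix_inv A \<in> Gamma0_2"
proof -
  assume "A \<in> Gamma0_2"
  then obtain a b c d :: int where
    A: "A = mat2 (of_int a) (of_int b) (of_int c) (of_int d)" "a*d - b*c = 1" "even c"
    unfolding G_iff by blast
  have "real_of_int a * of_int d - of_int b * of_int c = 1" using A(2)
    by (metis of_int_1 of_int_diff of_int_mult)
  then have "matrix_inv A = mat2 (of_int d) (of_int (-b)) (of_int (-c)) (of_int a)"
    using A by (simp add: matrix_inv_mat2)
  then show ?thesis unfolding G_iff using A
    by (intro exI[of _ d] exI[of _ "-b"] exI[of _ "-c"] exI[of _ a]) (simp add: algebra_simps)
qed

lemma GW: "A \<in> Gamma0_2 \<Longrightarrow> B \<in> Wset \<Longrightarrow> A ** B \<in> Wset"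
proof -
  assume "A \<in> Gamma0_2" "B \<in> Wset"
  then obtain a b c d p q r t :: int where
    A: "A = mat2 (of_int a) (of_int b) (of_int c) (of_int d)" "a*d - b*c = 1" "even c" and
    B: "B = mat2 (sqrt 2 * of_int p) (of_int q / sqrt 2) (sqrt 2 * of_int r) (sqrt 2 * of_int t)"
       "2*p*t - q*r = 1"
    unfolding G_iff Wset_def by blast
  obtain c0 where c0: "c = 2*c0" using A(3) by blast
  have "2*(a*p+b*r)*(c0*q+d*t) - (a*q+2*b*t)*(c*p+d*r) = (a*d-b*c)*(2*p*t-q*r)"
    by (simp add: algebra_simps c0)
  then have det: "2*(a*p+b*r)*(c0*q+d*t) - (a*q+2*b*t)*(c*p+d*r) = 1" using A B by simp
  have "A ** B = mat2 (sqrt 2 * of_int (a*p+b*r)) (of_int (a*q+2*b*t) / sqrt 2)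
     (sqrt 2 * of_int (c*p+d*r)) (sqrt 2 * of_int (c0*q+d*t))"
    using A B c0 by (simp add: mat2_mult mat2_eq_iff field_simps)
  then show ?thesis unfolding Wset_def using det by blast
qed

lemma WG: "A \<in> Wset \<Longrightarrow> B \<in> Gamma0_2 \<Longrightarrow> A ** B \<in> Wset"
proof -
  assume "B \<in> Gamma0_2" "A \<in> Wset"
  then obtain a b c d p q r t :: int where
    B: "B = mat2 (of_int a) (of_int b) (of_int c) (of_int d)" "a*d - b*c = 1" "even c" and
    A: "A = mat2 (sqrt 2 * of_int p) (of_int q / sqrt 2) (sqrt 2 * of_int r) (sqrt 2 * of_int t)"
       "2*p*t - q*r = 1"
    unfolding G_iff Wset_def by blast
  obtain c0 where c0: "c = 2*c0" using B(3) by blast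
  have "2*(p*a+q*c0)*(r*b+t*d) - (2*p*b+q*d)*(r*a+t*c) = (a*d-b*c)*(2*p*t-q*r)"
    by (simp add: algebra_simps c0)
  then have det: "2*(p*a+q*c0)*(r*b+t*d) - (2*p*b+q*d)*(r*a+t*c) = 1" using A B by simp
  have "A ** B = mat2 (sqrt 2 * of_int (p*a+q*c0)) (of_int (2*p*b+q*d) / sqrt 2)
     (sqrt 2 * of_int (r*a+t*c)) (sqrt 2 * of_int (r*b+t*d))"
    using A B c0 by (simp add: mat2_mult mat2_eq_iff field_simps)
  then show ?thesis unfolding Wset_def using det by blast
qed

lemma WW: "A \<in> Wset \<Longrightarrow> B \<in> Wset \<Longrightarrow> A ** B \<in> Gamma0_2"
proof -
  assume "A \<in> Wset" "B \<in> Wset"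
  then obtain p q r t p' q' r' t' :: int where
    A: "A = mat2 (sqrt 2 * of_int p) (of_int q / sqrt 2) (sqrt 2 * of_int r) (sqrt 2 * of_int t)"
       "2*p*t - q*r = 1" and
    B: "B = mat2 (sqrt 2 * of_int p') (of_int q' / sqrt 2) (sqrt 2 * of_int r') (sqrt 2 * of_int t')"
       "2*p'*t' - q'*r' = 1"
    unfolding Wset_def by blast
  have "(2*p*p'+q*r')*(r*q'+2*t*t') - (p*q'+q*t')*(2*r*p'+2*t*r') = (2*p*t-q*r)*(2*p'*t'-q'*r')"
    by (simp add: algebra_simps)
  then have det: "(2*p*p'+q*r')*(r*q'+2*t*t') - (p*q'+q*t')*(2*r*p'+2*t*r') = 1" using A B by simp
  have "A ** B = mat2 (of_int (2*p*p'+q*r')) (of_int (p*q'+q*t')) (of_int (2*r*p'+2*t*r')) (of_int (r*q'+2*t*t'))"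
    using A B by (simp add: mat2_mult mat2_eq_iff field_simps)
  then show ?thesis unfolding G_iff using det
    by (intro exI[of _ "2*p*p'+q*r'"] exI[of _ "p*q'+q*t'"] exI[of _ "2*r*p'+2*t*r'"] exI[of _ "r*q'+2*t*t'"]) simp
qed

lemma W_inv: "A \<in> Wset \<Longrightarrow> matrix_inv A \<in> Wset"
proof -
  assume "A \<in> Wset"
  then obtain p q r t :: int where
    A: "A = mat2 (sqrt 2 * of_int p) (of_int q / sqrt 2) (sqrt 2 * of_int r) (sqrt 2 * of_int t)"
       "2*p*t - q*r = 1"
    unfolding Wset_def by blast
  have "real_of_int (2*p*t - q*r) = 1" using A(2) by simp
  then have "sqrt 2 * of_int p * (sqrt 2 * of_int t) - of_int q / sqrt 2 * (sqrt 2 * of_int r) = 1"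
    by (simp add: field_simps)
  then have "matrix_inv A = mat2 (sqrt 2 * of_int t) (of_int (-q) / sqrt 2) (sqrt 2 * of_int (-r)) (sqrt 2 * of_int p)"
    using A by (simp add: matrix_inv_mat2)
  moreover have "2*t*p - (-q)*(-r) = 1" using A(2) by (simp add: algebra_simps)
  ultimately show ?thesis unfolding Wset_def by blast
qed

lemma w2_W: "w2 \<in> Wset"
proof -
  have "w2 = mat2 (sqrt 2 * of_int 0) (of_int (-1) / sqrt 2) (sqrt 2 * of_int 1) (sqrt 2 * of_int 0)"
    unfolding w2_def by (simp add: scaleR_mat2 mat2_eq_iff field_simps)
  moreover have "2*0*0 - (-1)*1 = (1::int)" by simp
  ultimately show ?thesis unfolding Wset_def by blast
qed

lemma Gplus_cases: "A \<in> Gamma0_2_plus \<Longrightarrow> A \<in> Gamma0_2 \<or> A \<in> Wset"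
  by (induction rule: Gamma0_2_plus.induct)
    (auto simp: w2_W G_inv W_inv dest: GG GW WG WW)



lemma not_coprime_prime:
  fixes a b :: int
  assumes "\<not> coprime a b" "b \<noteq> 0"
  obtains p where "prime p" "p dvd a" "p dvd b"
proof -
  have "gcd a b \<noteq> 0" using assms by simp
  moreover have "\<not> is_unit (gcd a b)" using assms(1) by (simp add: coprime_iff_gcd_eq_1 is_unit_gcd)
  ultimately obtain p where "prime p" "p dvd gcd a b" using prime_divisorE by blast
  then show ?thesis using that by simp
qed

lemma L_coprime:
  fixes x y z :: int
  assumes x0: "x \<noteq> 0" and g: "gcd x (gcd y z) = 1"
  shows "\<exists>t. coprime (t*z - y) x"
proof -
  define P where "P = {p \<in> prime_factors x. \<not> p dvd y}"
  define t where "t = \<Prod>P"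
  have finP: "finite P" unfolding P_def by simp
  have "coprime (t*z - y) x"
  proof (rule ccontr)
    assume "\<not> coprime (t*z - y) x"
    then obtain p where p: "prime p" "p dvd t*z - y" "p dvd x" using x0 not_coprime_prime by blast
    have pn: "normalize p = p" using prime_ge_0_int[OF p(1)] by simp
    have pf: "p \<in> prime_factors x" using p x0 by (auto simp: in_prime_factors_iff)
    show False
    proof (cases "p dvd y")
      case True
      have "\<not> p dvd z"
      proof
        assume "p dvd z"
        then have "p dvd gcd x (gcd y z)" using True p by simp
        then have "p dvd 1" using g by simp
        then show False using p(1) not_prime_unit by blast
      qed
      moreover have "\<not> p dvd t"
      proof
        assume "p dvd t"
        then obtain q where q: "q \<in> P" "p dvd q" unfolding t_def using prime_dvd_prod_iff[OF finP p(1), of id] by auto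
        then have "prime q" unfolding P_def by auto
        then have "p = q" using q(2) p(1) pn by (metis primes_dvd_imp_eq)
        then show False using q(1) True unfolding P_def by auto
      qed
      ultimately have "\<not> p dvd t*z" by (simp add: prime_dvd_mult_iff[OF p(1)])
      moreover have "p dvd t*z" using dvd_add[OF p(2) True] by simp
      ultimately show False by simp
    next
      case False
      then have "p \<in> P" using pf unfolding P_def by auto
      then have "p dvd t" unfolding t_def using dvd_prodI[OF finP, of p "\<lambda>x. x"] by simp
      then have ptz: "p dvd t*z" by simp
      have "p dvd y" using dvd_diff[OF ptz p(2)] by simp
      then show False using False by simp
    qed
  qed
  then show ?thesis by blast
qed

lemma coprime_of_det:
  fixes a b c d :: int
  assumes "a*d - b*c = 1"
  shows "coprime b d"
proof (rule coprimeI)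
  fix e assume "e dvd b" "e dvd d"
  then have "e dvd a*d - b*c" by simp
  then show "is_unit e" using assms by simp
qed

lemma odd_of_det:
  fixes a b c d :: int
  assumes "a*d - b*c = 1" "even c"
  shows "odd d"
proof
  assume "even d"
  then have "even (a*d - b*c)" using assms(2) by simp
  then show False using assms(1) by simp
qed

lemma R1_ex:
  fixes a b c d :: int and m :: nat
  assumes m0: "m > 0" and det: "a*d - b*c = 1" and ev: "even c"
  shows "\<exists>x y z. (x,y,z) \<in> M1 m \<and> x dvd d \<and> int m dvd x*b + y*d"
proof -
  define x where "x = gcd d (int m)"
  have x0: "x > 0" using m0 unfolding x_def by simp
  have xd: "x dvd d" and xm: "x dvd int m" unfolding x_def by auto
  have oddd: "odd d" using odd_of_det[OF det ev] .
  have oddx: "odd x" using xd oddd by (metis dvd_trans)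
  define z where "z = int m div x"
  define d1 where "d1 = d div x"
  have mxz: "int m = x*z" unfolding z_def using xm by simp
  have dxd: "d = x*d1" unfolding d1_def using xd by simp
  have z0: "z > 0" using mxz x0 m0 by (metis of_nat_0_less_iff zero_less_mult_pos)
  have cop: "coprime d1 z" unfolding d1_def z_def x_def using m0 by (intro div_gcd_coprime) simp
  obtain u w where uv: "u*d1 + w*z = gcd d1 z" using bezout_int by blast
  then have uv1: "u*d1 + w*z = 1" using cop by simp
  define y where "y = (-b*u) mod z"
  have y0: "0 \<le> y" "y < z" unfolding y_def using z0 by simp_all
  have "z dvd b + y*d1"
  proof -
    define q where "q = (-b*u) div z"
    have yq: "y = -b*u - z*q" unfolding y_def q_def by (simp add: minus_div_mult_eq_mod[symmetric])
    have h1: "1 - u*d1 = w*z" using uv1 by linarith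
    have "b + y*d1 = b*(1 - u*d1) - z*q*d1" unfolding yq by (simp add: algebra_simps)
    also have "\<dots> = z*(b*w - q*d1)" unfolding h1 by (simp add: algebra_simps)
    finally show ?thesis by simp
  qed
  then have "x*z dvd x*(b + y*d1)" by (rule mult_dvd_mono[OF dvd_refl])
  moreover have "x*(b + y*d1) = x*b + y*d" unfolding dxd by (simp add: algebra_simps)
  ultimately have m_dvd: "int m dvd x*b + y*d" using mxz by simp
  have g: "gcd x (gcd y z) = 1"
  proof -
    let ?e = "gcd x (gcd y z)"
    have "?e dvd z" "?e dvd y" "?e dvd x" by (meson dvd_trans gcd_dvd1 gcd_dvd2)+
    then have "?e dvd b + y*d1" using \<open>z dvd b + y*d1\<close> by (meson dvd_trans)
    moreover have "?e dvd y*d1" using \<open>?e dvd y\<close> by simp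
    ultimately have "?e dvd (b + y*d1) - y*d1" by (rule dvd_diff)
    then have "?e dvd b" by simp
    moreover have "?e dvd d" using \<open>?e dvd x\<close> xd by (rule dvd_trans)
    ultimately have "?e dvd 1" using coprime_common_divisor[OF coprime_of_det[OF det]] by blast
    then show ?thesis by simp
  qed
  have "(x,y,z) \<in> M1 m" unfolding M1_def using x0 z0 mxz y0 g oddx by simp
  then show ?thesis using xd m_dvd by blast
qed

lemma x_is_gcd:
  fixes b d x y z :: int and m :: nat
  assumes cop: "coprime b d" and x0: "x > 0" and mxz: "int m = x*z" and xd: "x dvd d" and md: "int m dvd x*b + y*d"
  shows "x = gcd d (int m)"
proof -
  let ?e = "gcd d (int m)"
  have "x dvd ?e" using xd mxz by simp
  moreover have "?e dvd x"
  proof -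
    have "?e dvd int m" by simp
    then have "?e dvd x*b + y*d" using md by (rule dvd_trans)
    moreover have "?e dvd y*d" by simp
    ultimately have "?e dvd (x*b + y*d) - y*d" by (rule dvd_diff)
    then have "?e dvd x*b" by simp
    moreover have "coprime ?e b"
    proof (rule coprimeI)
      fix f assume "f dvd ?e" "f dvd b"
      then have "f dvd d" by (meson dvd_trans gcd_dvd1)
      then show "is_unit f" using coprime_common_divisor[OF cop \<open>f dvd b\<close>] by blast
    qed
    ultimately show ?thesis by (simp add: coprime_dvd_mult_left_iff)
  qed
  ultimately show ?thesis using x0 by (simp add: zdvd_antisym_nonneg)
qed

lemma R1_uniq:
  fixes a b c d :: int and m :: nat
  assumes m0: "m > 0" and det: "a*d - b*c = 1"
    and t: "(x,y,z) \<in> M1 m" "x dvd d" "int m dvd x*b + y*d"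
    and t': "(x',y',z') \<in> M1 m" "x' dvd d" "int m dvd x'*b + y'*d"
  shows "(x,y,z) = (x',y',z')"
proof -
  have cop: "coprime b d" using coprime_of_det[OF det] .
  have M: "x > 0" "z > 0" "x*z = int m" "0 \<le> y" "y < z" using t(1) unfolding M1_def by auto
  have M': "x' > 0" "z' > 0" "x'*z' = int m" "0 \<le> y'" "y' < z'" using t'(1) unfolding M1_def by auto
  have xx: "x = gcd d (int m)" using x_is_gcd[OF cop M(1) M(3)[symmetric] t(2) t(3)] .
  have xx': "x' = gcd d (int m)" using x_is_gcd[OF cop M'(1) M'(3)[symmetric] t'(2) t'(3)] .
  have "x = x'" using xx xx' by simp
  then have "x*z = x*z'" using M(3) M'(3) by simp
  then have zz: "z = z'" using M(1) by simp
  define d1 where "d1 = d div x"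
  have dxd: "d = x*d1" unfolding d1_def using t(2) by simp
  have zdef: "z = int m div x" using M(1) by (simp add: M(3)[symmetric])
  have cop2: "coprime z d1" using div_gcd_coprime[of d "int m"] m0 xx unfolding d1_def zdef
    by (simp add: coprime_commute)
  have zd1: "z dvd b + y*d1"
  proof -
    have "x*z dvd x*(b + y*d1)" using t(3) M(3) dxd by (simp add: algebra_simps)
    then show ?thesis using M(1) by simp
  qed
  have zd1': "z dvd b + y'*d1"
  proof -
    have "x*z dvd x*(b + y'*d1)" using t'(3) M(3) dxd \<open>x = x'\<close> by (simp add: algebra_simps)
    then show ?thesis using M(1) by simp
  qed
  have "z dvd (y - y')*d1" using dvd_diff[OF zd1 zd1'] by (simp add: algebra_simps)
  then have "z dvd y - y'" using cop2 by (simp add: coprime_dvd_mult_left_iff)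
  then have "y mod z = y' mod z" by (simp add: mod_eq_dvd_iff)
  then have "y = y'" using M M' zz by simp
  then show ?thesis using \<open>x = x'\<close> zz by simp
qed

lemma R2:
  fixes m :: nat
  assumes t: "(x,y,z) \<in> M1 m"
  shows "\<exists>a b c d. a*d - b*c = 1 \<and> even c \<and> x dvd d \<and> int m dvd x*b + y*d"
proof -
  have M: "x > 0" "z > 0" "x*z = int m" "0 \<le> y" "y < z" "gcd x (gcd y z) = 1" "odd x"
    using t unfolding M1_def by auto
  obtain t where ct: "coprime (t*z - y) x" using L_coprime[of x y z] M by auto
  define b where "b = t*z - y"
  have "coprime 2 x" using M(7) by simp
  then have "coprime (2*b) x" using ct unfolding coprime_mult_left_iff b_def by blast
  then obtain u w where uv: "u*(2*b) + w*x = 1" using bezout_int[of "2*b" x] by auto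
  have "w*x - b*(2*(-u)) = 1" using uv by (simp add: algebra_simps)
  moreover have "x*b + y*x = int m * t" unfolding b_def using M(3) by (simp add: algebra_simps)
  ultimately show ?thesis
    by (intro exI[of _ w] exI[of _ b] exI[of _ "2*(-u)"] exI[of _ x]) simp
qed

lemma R3nt:
  fixes m :: nat
  assumes t: "(x,y,z) \<in> M1 m" and h: "x dvd d" "int m dvd x*b + y*d" "x dvd d'" "int m dvd x*b' + y*d'"
  shows "int m dvd d*b' - b*d'"
proof -
  have M: "x > 0" "x*z = int m" using t unfolding M1_def by auto
  obtain d1 where d1: "d = x*d1" using h(1) by blast
  obtain d1' where d1': "d' = x*d1'" using h(3) by blast
  have zd1: "z dvd b + y*d1"
  proof -
    have "x*z dvd x*(b + y*d1)" using h(2) M(2) d1 by (simp add: algebra_simps)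
    then show ?thesis using M(1) by simp
  qed
  have zd1': "z dvd b' + y*d1'"
  proof -
    have "x*z dvd x*(b' + y*d1')" using h(4) M(2) d1' by (simp add: algebra_simps)
    then show ?thesis using M(1) by simp
  qed
  have "d1*b' - b*d1' = d1*(b' + y*d1') - d1'*(b + y*d1)" by (simp add: algebra_simps)
  then have "z dvd d1*b' - b*d1'" using zd1 zd1' by simp
  then have "x*z dvd x*(d1*b' - b*d1')" by simp
  then show ?thesis using M(2) d1 d1' by (simp add: algebra_simps)
qed



lemma matrix_inv_eqI:
  fixes A B :: "real^2^2"
  assumes AB: "A ** B = mat 1" "B ** A = mat 1"
  shows "matrix_inv A = B"
proof -
  have "A ** matrix_inv A = mat 1 \<and> matrix_inv A ** A = mat 1"
    unfolding matrix_inv_def by (rule someI[of _ B]) (use AB in auto)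
  then have "matrix_inv A = (B ** A) ** matrix_inv A" using AB by (simp add: matrix_mul_lid)
  also have "\<dots> = B" using \<open>A ** matrix_inv A = mat 1 \<and> _\<close>
    by (simp add: matrix_mul_assoc[symmetric] matrix_mul_rid)
  finally show ?thesis .
qed

lemma int_div_Ints:
  assumes "n \<noteq> 0"
  shows "(of_int k / of_int n :: real) \<in> \<int> \<longleftrightarrow> n dvd k"
proof
  assume "of_int k / of_int n \<in> (\<int>::real set)"
  then obtain j where "of_int k / of_int n = (of_int j :: real)" by (auto elim: Ints_cases)
  then have "real_of_int k = of_int (n*j)" using assms by (simp add: field_simps)
  then have "k = n*j" by (simp only: of_int_eq_iff)
  then show "n dvd k" by simp
next
  assume "n dvd k"
  then obtain j where "k = n*j" by blast
  then show "of_int k / of_int n \<in> (\<int>::real set)" using assms by simp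
qed

lemma G_coords:
  assumes "g \<in> Gamma0_2"
  obtains a b c d :: int where "g = mat2 (of_int a) (of_int b) (of_int c) (of_int d)" "a*d - b*c = 1" "even c"
  using assms unfolding G_iff by blast

lemma G_inv_coords:
  assumes "a*d - b*c = (1::int)"
  shows "matrix_inv (mat2 (of_int a) (of_int b) (of_int c) (of_int d)) = mat2 (of_int d) (- of_int b) (- of_int c) (of_int a)"
proof -
  have "real_of_int a * of_int d - of_int b * of_int c = 1" using assms
    by (metis of_int_1 of_int_diff of_int_mult)
  then show ?thesis by (simp add: matrix_inv_mat2)
qed

lemma G_rinv: "g \<in> Gamma0_2 \<Longrightarrow> g ** matrix_inv g = mat 1"
proof -
  assume "g \<in> Gamma0_2"
  then obtain a b c d :: int where g: "g = mat2 (of_int a) (of_int b) (of_int c) (of_int d)" "a*d - b*c = 1"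
    by (rule G_coords)
  have "real_of_int a * of_int d - of_int b * of_int c = 1" using g(2)
    by (metis of_int_1 of_int_diff of_int_mult)
  then show ?thesis using g G_inv_coords[OF g(2)]
    by (simp add: mat2_mult mat1_mat2 mat2_eq_iff algebra_simps)
qed

lemma mat1_G: "mat 1 \<in> Gamma0_2"
  unfolding G_iff mat1_mat2 by (intro exI[of _ 1] exI[of _ 0]) auto

lemma card_quot:
  assumes E: "\<And>g. g \<in> G \<Longrightarrow> \<exists>!t. t \<in> B \<and> R g t"
    and S: "\<And>t. t \<in> B \<Longrightarrow> \<exists>g\<in>G. R g t"
    and R3: "\<And>g g' t. g \<in> G \<Longrightarrow> g' \<in> G \<Longrightarrow> R g t \<Longrightarrow> R g' t \<Longrightarrow> \<phi> g = \<phi> g'"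
    and R4: "\<And>g g' t. g \<in> G \<Longrightarrow> g' \<in> G \<Longrightarrow> \<phi> g = \<phi> g' \<Longrightarrow> R g t \<Longrightarrow> R g' t"
  shows "card (\<phi> ` G) = card B"
proof -
  define k where "k t = \<phi> (SOME g. g \<in> G \<and> R g t)" for t
  have sel: "(SOME g. g \<in> G \<and> R g t) \<in> G \<and> R (SOME g. g \<in> G \<and> R g t) t" if "t \<in> B" for t
    using someI_ex[OF S[OF that, unfolded Bex_def]] .
  have "bij_betw k B (\<phi> ` G)"
  proof (rule bij_betw_imageI)
    show "inj_on k B"
    proof (rule inj_onI)
      fix t t' assume t: "t \<in> B" "t' \<in> B" "k t = k t'"
      let ?g = "SOME g. g \<in> G \<and> R g t" and ?g' = "SOME g. g \<in> G \<and> R g t'"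
      have s1: "?g \<in> G" "R ?g t" using sel[OF t(1)] by auto
      have s2: "?g' \<in> G" "R ?g' t'" using sel[OF t(2)] by auto
      have "\<phi> ?g = \<phi> ?g'" using t(3) unfolding k_def .
      then have "R ?g' t" using R4[OF s1(1) s2(1) _ s1(2)] by blast
      then show "t = t'" using E[OF s2(1)] s2(2) t(1,2) by blast
    qed
  next
    show "k ` B = \<phi> ` G"
    proof
      show "k ` B \<subseteq> \<phi> ` G" unfolding k_def using sel by blast
    next
      show "\<phi> ` G \<subseteq> k ` B"
      proof
        fix v assume "v \<in> \<phi> ` G"
        then obtain g where g: "g \<in> G" "v = \<phi> g" by blast
        then obtain t where t: "t \<in> B" "R g t" using E by blast
        have s1: "(SOME g. g \<in> G \<and> R g t) \<in> G" "R (SOME g. g \<in> G \<and> R g t) t" using sel[OF t(1)] by auto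
        have "\<phi> (SOME g. g \<in> G \<and> R g t) = \<phi> g" using R3[OF s1(1) g(1) s1(2) t(2)] .
        then have "v = k t" unfolding k_def using g(2) by simp
        then show "v \<in> k ` B" using t(1) by (rule image_eqI)
      qed
    qed
  qed
  then show ?thesis by (rule bij_betw_same_card[symmetric])
qed

locale setting =
  fixes m :: nat
  assumes m0: "m > 0"
begin

definition "al = mat2 1 0 0 (real m)"
definition "ali = mat2 1 0 0 (1 / real m)"
definition "H = Gamma0_2 \<inter> conj_by al Gamma0_2_plus"
definition "T t = (case t of (x,y,z) \<Rightarrow> mat2 (of_int x) (of_int y) 0 (of_int z))"
definition "Rel g t \<longleftrightarrow> t \<in> M1 m \<and> T t ** g ** ali \<in> Gamma0_2"

lemma al_ali: "al ** ali = mat 1" "ali ** al = mat 1"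
  using m0 by (simp_all add: al_def ali_def mat2_mult mat1_mat2)

lemma inv_al: "matrix_inv al = ali"
  using al_ali by (rule matrix_inv_eqI)

lemma K:
  assumes h0: "h0 \<in> Gamma0_2_plus" and hG: "ali ** h0 ** al \<in> Gamma0_2"
  shows "h0 \<in> Gamma0_2"
proof -
  { assume "h0 \<in> Wset"
    then obtain p q r t :: int where
      h: "h0 = mat2 (sqrt 2 * of_int p) (of_int q / sqrt 2) (sqrt 2 * of_int r) (sqrt 2 * of_int t)"
         "2*p*t - q*r = 1"
      unfolding Wset_def by blast
    have e: "ali ** h0 ** al = mat2 (sqrt 2 * of_int p) (real m * (of_int q / sqrt 2))
                (sqrt 2 * of_int r / real m) (sqrt 2 * of_int t)"
      using m0 unfolding h al_def ali_def by (simp add: mat2_mult mat2_eq_iff)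
    have ints: "\<forall>i j. (ali ** h0 ** al)$i$j \<in> \<int>" using hG unfolding Gamma0_2_def by blast
    have "sqrt 2 * of_int p \<in> \<int>" using ints e by (metis mat2_nth(1))
    then have p0: "p = 0" by (rule sqrt2_int)
    have "sqrt 2 * real_of_int r / real m \<in> \<int>" using ints e by (metis mat2_nth(3))
    then obtain k where "sqrt 2 * real_of_int r / real m = of_int k" by (auto elim: Ints_cases)
    then have "sqrt 2 * real_of_int r = of_int (int m * k)" using m0 by (simp add: field_simps)
    then have "r = 0" by (intro sqrt2_int) (metis Ints_of_int)
    then have False using h(2) p0 by simp }
  then show ?thesis using Gplus_cases[OF h0] by blast
qed

lemma CondIff:
  assumes g: "g = mat2 (of_int a) (of_int b) (of_int c) (of_int d)" "a*d - b*c = 1" "even c"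
    and t: "(x,y,z) \<in> M1 m"
  shows "T (x,y,z) ** g ** ali \<in> Gamma0_2 \<longleftrightarrow> x dvd d \<and> int m dvd x*b + y*d"
proof -
  have M: "x > 0" "z > 0" "x*z = int m" using t unfolding M1_def by auto
  have mr: "real m = of_int x * of_int z" using M(3) by (metis of_int_mult of_int_of_nat_eq)
  have e: "T (x,y,z) ** g ** ali = mat2 (of_int (x*a+y*c)) (of_int (x*b+y*d) / of_int (int m))
      (of_int (z*c)) (of_int (z*d) / of_int (int m))"
    unfolding g T_def ali_def by (simp add: mat2_mult mat2_eq_iff field_simps)
  have zd: "int m dvd z*d \<longleftrightarrow> x dvd d" using M by (simp add: M(3)[symmetric] mult.commute)
  have mne: "int m \<noteq> 0" using m0 by simp
  show ?thesis
  proof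
    assume "T (x,y,z) ** g ** ali \<in> Gamma0_2"
    then have ints: "\<forall>i j. (T (x,y,z) ** g ** ali)$i$j \<in> \<int>" unfolding Gamma0_2_def by blast
    have "of_int (x*b+y*d) / of_int (int m) \<in> (\<int>::real set)" using ints e by (metis mat2_nth(2))
    moreover have "of_int (z*d) / of_int (int m) \<in> (\<int>::real set)" using ints e by (metis mat2_nth(4))
    ultimately show "x dvd d \<and> int m dvd x*b + y*d" using int_div_Ints[OF mne] zd by blast
  next
    assume h: "x dvd d \<and> int m dvd x*b + y*d"
    obtain k1 where k1: "x*b+y*d = int m * k1" using h by blast
    obtain k2 where k2: "z*d = int m * k2" using h zd by (metis dvd_def)
    obtain c0 where c0: "c = 2*c0" using g(3) by blast
    have dt: "(x*a+y*c)*(z*d) - (x*b+y*d)*(z*c) = (x*z)*(a*d-b*c)" by (simp add: algebra_simps)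
    have "real_of_int (x*a+y*c) * of_int k2 - of_int k1 * of_int (z*c) = 1"
    proof -
      have "int m * ((x*a+y*c) * k2 - k1 * (z*c)) = (x*a+y*c)*(int m*k2) - (int m*k1)*(z*c)"
        by (simp add: algebra_simps)
      also have "\<dots> = (x*a+y*c)*(z*d) - (x*b+y*d)*(z*c)" using k1 k2 by simp
      also have "\<dots> = (x*z)*(a*d-b*c)" by (rule dt)
      also have "\<dots> = int m * 1" using M(3) g(2) by simp
      finally have "int m * ((x*a+y*c) * k2 - k1 * (z*c)) = int m * 1" .
      then have "(x*a+y*c) * k2 - k1 * (z*c) = 1" using mne by simp
      then show ?thesis by (metis of_int_1 of_int_diff of_int_mult)
    qed
    moreover have "T (x,y,z) ** g ** ali = mat2 (of_int (x*a+y*c)) (of_int k1) (of_int (z*c)) (of_int k2)"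
      unfolding e k1 k2 using mne by simp
    ultimately show "T (x,y,z) ** g ** ali \<in> Gamma0_2" unfolding Gamma0_2_def
      using c0 by (auto simp: forall_2)
  qed
qed


lemma RelE: "g \<in> Gamma0_2 \<Longrightarrow> \<exists>!t. t \<in> M1 m \<and> Rel g t"
proof -
  assume "g \<in> Gamma0_2"
  then obtain a b c d :: int where g: "g = mat2 (of_int a) (of_int b) (of_int c) (of_int d)" "a*d - b*c = 1" "even c"
    by (rule G_coords)
  obtain x y z where t: "(x,y,z) \<in> M1 m" "x dvd d" "int m dvd x*b + y*d" using R1_ex[OF m0 g(2,3)] by blast
  show ?thesis
  proof (rule ex1I[of _ "(x,y,z)"])
    show "(x,y,z) \<in> M1 m \<and> Rel g (x,y,z)" unfolding Rel_def using t CondIff[OF g t(1)] by blast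
  next
    fix t' assume h: "t' \<in> M1 m \<and> Rel g t'"
    obtain x' y' z' where t'd: "t' = (x',y',z')" by (cases t')
    have tm': "(x',y',z') \<in> M1 m" using h t'd by simp
    have "T (x',y',z') ** g ** ali \<in> Gamma0_2" using h t'd unfolding Rel_def by simp
    then have c: "x' dvd d" "int m dvd x'*b + y'*d" using CondIff[OF g tm'] by simp_all
    have "(x',y',z') = (x,y,z)" by (rule R1_uniq[OF m0 g(2) tm' c t])
    then show "t' = (x,y,z)" using t'd by simp
  qed
qed

lemma RelS: "t \<in> M1 m \<Longrightarrow> \<exists>g\<in>Gamma0_2. Rel g t"
proof -
  assume tm: "t \<in> M1 m"
  obtain x y z where td: "t = (x,y,z)" by (cases t)
  have tm': "(x,y,z) \<in> M1 m" using tm td by simp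
  obtain a b c d where abcd: "a*d - b*c = 1" "even c" "x dvd d" "int m dvd x*b + y*d"
    using R2[OF tm'] by blast
  let ?g = "mat2 (of_int a) (of_int b) (of_int c) (of_int d)"
  have "?g \<in> Gamma0_2" unfolding G_iff using abcd(1,2) by blast
  moreover have "T (x,y,z) ** ?g ** ali \<in> Gamma0_2" using CondIff[OF refl abcd(1,2) tm'] abcd(3,4) by simp
  then have "Rel ?g t" unfolding Rel_def td using tm' by simp
  ultimately show ?thesis by blast
qed

lemma mat1_H: "mat 1 \<in> H"
proof -
  have "mat 1 = matrix_inv al ** mat 1 ** al" unfolding inv_al using al_ali by (simp add: matrix_mul_rid)
  moreover have "mat 1 \<in> Gamma0_2_plus" using mat1_G by (rule Gamma0_2_plus.base)
  ultimately have "mat 1 \<in> conj_by al Gamma0_2_plus" unfolding conj_by_def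
    by (rule image_eqI[where f="\<lambda>h. matrix_inv al ** h ** al"])
  then show ?thesis unfolding H_def using mat1_G by (rule IntI[rotated])
qed

lemma H_E:
  assumes "h \<in> H"
  obtains h0 where "h0 \<in> Gamma0_2_plus" "h = ali ** h0 ** al" "h \<in> Gamma0_2"
proof -
  have hG: "h \<in> Gamma0_2" and hc: "h \<in> conj_by al Gamma0_2_plus" using assms unfolding H_def by auto
  from hc obtain h0 where "h0 \<in> Gamma0_2_plus" "h = matrix_inv al ** h0 ** al" unfolding conj_by_def by (rule imageE)
  then show thesis using that hG unfolding inv_al by simp
qed

lemma R4:
  assumes g: "g \<in> Gamma0_2" "g' \<in> Gamma0_2" and eq: "(\<lambda>h. g ** h) ` H = (\<lambda>h. g' ** h) ` H"
    and r: "Rel g t"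
  shows "Rel g' t"
proof -
  have "g' \<in> (\<lambda>h. g' ** h) ` H" using image_eqI[where f="\<lambda>h. g' ** h", OF matrix_mul_rid[symmetric] mat1_H] .
  then obtain h where h: "h \<in> H" "g' = g ** h" using eq by auto
  obtain h0 where h0: "h0 \<in> Gamma0_2_plus" "h = ali ** h0 ** al" "h \<in> Gamma0_2" using h(1) by (rule H_E)
  have "h0 \<in> Gamma0_2" using K[OF h0(1)] h0 by simp
  have "T t ** g' ** ali = (T t ** g ** ali ** h0) ** (al ** ali)"
    unfolding h h0 by (simp add: matrix_mul_assoc)
  also have "\<dots> = (T t ** g ** ali) ** h0" using al_ali by (simp add: matrix_mul_rid matrix_mul_assoc)
  finally have "T t ** g' ** ali = (T t ** g ** ali) ** h0" .
  then show ?thesis using r GG[OF _ \<open>h0 \<in> Gamma0_2\<close>] unfolding Rel_def by auto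
qed

lemma conj_G:
  assumes g: "g \<in> Gamma0_2" "g' \<in> Gamma0_2" and r: "Rel g t" "Rel g' t"
  shows "al ** (matrix_inv g ** g') ** ali \<in> Gamma0_2"
proof -
  obtain a b c d :: int where gc: "g = mat2 (of_int a) (of_int b) (of_int c) (of_int d)" "a*d - b*c = 1" "even c"
    using g(1) by (rule G_coords)
  obtain a' b' c' d' :: int where gc': "g' = mat2 (of_int a') (of_int b') (of_int c') (of_int d')" "a'*d' - b'*c' = 1" "even c'"
    using g(2) by (rule G_coords)
  obtain x y z where td: "t = (x,y,z)" by (cases t)
  have tm: "(x,y,z) \<in> M1 m" using r td unfolding Rel_def by auto
  have c1: "x dvd d" "int m dvd x*b + y*d" using r(1) td CondIff[OF gc tm] unfolding Rel_def by auto
  have c2: "x dvd d'" "int m dvd x*b' + y*d'" using r(2) td CondIff[OF gc' tm] unfolding Rel_def by auto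
  obtain k where k: "d*b' - b*d' = int m * k" using R3nt[OF tm c1 c2] by blast
  have mne: "real m \<noteq> 0" using m0 by simp
  have e: "al ** (matrix_inv g ** g') ** ali = mat2 (of_int (d*a' - b*c')) (of_int k)
            (of_int (int m * (a*c' - c*a'))) (of_int (a*d' - c*b'))"
  proof -
    have "real_of_int (d*b' - b*d') = of_int (int m * k)" using k by simp
    then have kk: "real_of_int d * of_int b' - of_int b * of_int d' = real m * of_int k" by simp
    show ?thesis unfolding gc gc'(1) G_inv_coords[OF gc(2)] al_def ali_def
      using mne kk by (simp add: mat2_mult mat2_eq_iff field_simps)
  qed
  have "(d*a' - b*c')*(a*d' - c*b') - k*(int m * (a*c' - c*a')) = (a*d-b*c)*(a'*d'-b'*c')"
  proof -
    have "k*(int m * (a*c' - c*a')) = (d*b' - b*d')*(a*c' - c*a')" using k by simp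
    then show ?thesis by (simp add: algebra_simps)
  qed
  then have "(d*a' - b*c')*(a*d' - c*b') - k*(int m * (a*c' - c*a')) = 1" using gc(2) gc'(2) by simp
  moreover have "even (int m * (a*c' - c*a'))" using gc(3) gc'(3) by auto
  ultimately show ?thesis unfolding e G_iff by blast
qed

lemma coset_sub:
  assumes g: "g \<in> Gamma0_2" "g' \<in> Gamma0_2" and r: "Rel g t" "Rel g' t"
  shows "(\<lambda>h. g' ** h) ` H \<subseteq> (\<lambda>h. g ** h) ` H"
proof
  fix v assume "v \<in> (\<lambda>h. g' ** h) ` H"
  then obtain h where h: "h \<in> H" "v = g' ** h" by auto
  obtain h0 where h0: "h0 \<in> Gamma0_2_plus" "h = ali ** h0 ** al" "h \<in> Gamma0_2" using h(1) by (rule H_E)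
  let ?u = "matrix_inv g ** g'"
  have uG: "?u \<in> Gamma0_2" using GG[OF G_inv[OF g(1)] g(2)] .
  have "?u ** h \<in> Gamma0_2" using GG[OF uG h0(3)] .
  moreover have "?u ** h \<in> conj_by al Gamma0_2_plus"
  proof -
    have "al ** ?u ** ali \<in> Gamma0_2" using conj_G[OF g r] by (simp add: matrix_mul_assoc)
    then have "al ** ?u ** ali \<in> Gamma0_2_plus" by (rule Gamma0_2_plus.base)
    then have inP: "al ** ?u ** ali ** h0 \<in> Gamma0_2_plus" using h0(1) by (rule Gamma0_2_plus.mult)
    have "matrix_inv al ** (al ** ?u ** ali ** h0) ** al = (ali ** al) ** ?u ** ali ** h0 ** al"
      unfolding inv_al by (simp add: matrix_mul_assoc)
    also have "\<dots> = ?u ** h" unfolding h0(2) using al_ali by (simp add: matrix_mul_lid matrix_mul_assoc)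
    finally show ?thesis unfolding conj_by_def using inP by (metis image_eqI)
  qed
  ultimately have uH: "?u ** h \<in> H" unfolding H_def by blast
  have uv: "g ** (?u ** h) = v"
  proof -
    have "g ** (?u ** h) = (g ** matrix_inv g) ** g' ** h" by (simp add: matrix_mul_assoc)
    also have "\<dots> = v" using G_rinv[OF g(1)] h(2) by (simp add: matrix_mul_lid)
    finally show ?thesis .
  qed
  show "v \<in> (\<lambda>h. g ** h) ` H" using image_eqI[where f="\<lambda>h. g ** h", OF uv[symmetric] uH] .
qed

lemma R3:
  assumes g: "g \<in> Gamma0_2" "g' \<in> Gamma0_2" and r: "Rel g t" "Rel g' t"
  shows "(\<lambda>h. g ** h) ` H = (\<lambda>h. g' ** h) ` H"
  by (rule equalityI[OF coset_sub[OF g(2,1) r(2,1)] coset_sub[OF g r]])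


lemma index_eq: "subgroup_index Gamma0_2 H = card (M1 m)"
proof -
  have "{(\<lambda>h. g ** h) ` H | g. g \<in> Gamma0_2} = (\<lambda>g. (\<lambda>h. g ** h) ` H) ` Gamma0_2"
    by (rule Setcompr_eq_image)
  moreover have "card ((\<lambda>g. (\<lambda>h. g ** h) ` H) ` Gamma0_2) = card (M1 m)"
  proof (rule card_quot[where R = Rel])
    show "\<And>g. g \<in> Gamma0_2 \<Longrightarrow> \<exists>!t. t \<in> M1 m \<and> Rel g t" by (rule RelE)
    show "\<And>t. t \<in> M1 m \<Longrightarrow> \<exists>g\<in>Gamma0_2. Rel g t" by (rule RelS)
    show "\<And>g g' t. g \<in> Gamma0_2 \<Longrightarrow> g' \<in> Gamma0_2 \<Longrightarrow> Rel g t \<Longrightarrow> Rel g' t \<Longrightarrow>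
        (\<lambda>h. g ** h) ` H = (\<lambda>h. g' ** h) ` H" by (rule R3)
    show "\<And>g g' t. g \<in> Gamma0_2 \<Longrightarrow> g' \<in> Gamma0_2 \<Longrightarrow>
        (\<lambda>h. g ** h) ` H = (\<lambda>h. g' ** h) ` H \<Longrightarrow> Rel g t \<Longrightarrow> Rel g' t" by (rule R4)
  qed
  ultimately show ?thesis unfolding subgroup_index_def by (simp only:)
qed

end

lemma index_M1:
  assumes "m > 0"
  shows "subgroup_index Gamma0_2 (Gamma0_2 \<inter> conj_by (mat2 1 0 0 (real m)) Gamma0_2_plus) = card (M1 m)"
proof -
  interpret setting m using assms by unfold_locales
  show ?thesis using index_eq unfolding H_def al_def .
qed



definition Mn :: "nat \<Rightarrow> (nat \<times> nat \<times> nat) set" where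
  "Mn n = {(x,y,z). x > 0 \<and> z > 0 \<and> x*z = n \<and> y < z \<and> gcd x (gcd y z) = 1}"

definition M1n :: "nat \<Rightarrow> (nat \<times> nat \<times> nat) set" where
  "M1n n = {(x,y,z). x > 0 \<and> z > 0 \<and> x*z = n \<and> y < z \<and> gcd x (gcd y z) = 1 \<and> odd x}"

lemma finite_Mn: "finite (Mn n)"
proof -
  have "Mn n \<subseteq> {..n} \<times> {..n} \<times> {..n}"
  proof
    fix t assume "t \<in> Mn n"
    then obtain x y z where t: "t = (x,y,z)" "x > 0" "z > 0" "x*z = n" "y < z" unfolding Mn_def by auto
    have "x \<le> n" "z \<le> n" using t by (metis dvd_imp_le dvd_triv_left dvd_triv_right mult_pos_pos)+
    then show "t \<in> {..n} \<times> {..n} \<times> {..n}" using t by auto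
  qed
  then show ?thesis by (rule finite_subset) auto
qed

lemma M1_eq: "M1 m = (\<lambda>(x,y,z). (int x, int y, int z)) ` M1n m"
proof
  show "M1 m \<subseteq> (\<lambda>(x,y,z). (int x, int y, int z)) ` M1n m"
  proof
    fix t assume "t \<in> M1 m"
    then obtain x y z where t: "t = (x,y,z)" "x > 0" "z > 0" "x*z = int m" "0 \<le> y" "y < z"
      "gcd x (gcd y z) = 1" "odd x" unfolding M1_def by auto
    obtain x' where x': "x = int x'" using t(2) by (metis less_imp_le nonneg_int_cases)
    obtain y' where y': "y = int y'" using t(5) by (metis nonneg_int_cases)
    obtain z' where z': "z = int z'" using t(3) by (metis less_imp_le nonneg_int_cases)
    have "int (x'*z') = int m" using t(4) x' z' by simp
    then have "x'*z' = m" by (simp only: of_nat_eq_iff)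
    moreover have "int (gcd x' (gcd y' z')) = 1" using t(7) x' y' z' by simp
    ultimately have "(x',y',z') \<in> M1n m" unfolding M1n_def using t x' y' z' by simp
    then show "t \<in> (\<lambda>(x,y,z). (int x, int y, int z)) ` M1n m" using t(1) x' y' z' by force
  qed
next
  show "(\<lambda>(x,y,z). (int x, int y, int z)) ` M1n m \<subseteq> M1 m"
  proof
    fix t assume "t \<in> (\<lambda>(x,y,z). (int x, int y, int z)) ` M1n m"
    then obtain x y z where t: "t = (int x, int y, int z)" "(x,y,z) \<in> M1n m" by auto
    then have h: "x > 0" "z > 0" "x*z = m" "y < z" "gcd x (gcd y z) = 1" "odd x" unfolding M1n_def by auto
    have "int x * int z = int m" using h(3) by (metis of_nat_mult)
    moreover have "gcd (int x) (gcd (int y) (int z)) = 1" using h(5) by simp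
    ultimately show "t \<in> M1 m" unfolding M1_def t(1) using h by simp
  qed
qed

lemma card_M1: "card (M1 m) = card (M1n m)"
proof -
  have "inj_on (\<lambda>(x,y,z). (int x, int y, int z)) (M1n m)" by (auto simp: inj_on_def)
  then show ?thesis unfolding M1_eq by (rule card_image)
qed

lemma A2:
  assumes ob: "odd b" and mab: "m = 2^a * b"
  shows "card (M1n m) = 2^a * card (Mn b)"
proof -
  define F :: "(nat \<times> nat \<times> nat) \<times> nat \<Rightarrow> nat \<times> nat \<times> nat" where "F = (\<lambda>((x,y,z),t). (x, y + t*z, 2^a*z))"
  have b0: "b > 0" using ob by (cases b) auto
  have into: "F u \<in> M1n m" if "u \<in> Mn b \<times> {..<2^a}" for u
  proof -
    obtain x y z t where u: "u = ((x,y,z),t)" by (metis prod.exhaust)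
    have h: "x > 0" "z > 0" "x*z = b" "y < z" "gcd x (gcd y z) = 1" "t < 2^a"
      using that unfolding u Mn_def by auto
    have ox: "odd x" using h(3) ob by (metis dvd_triv_left even_mult_iff)
    have "y + t*z < (t+1)*z" using h(4) by simp
    also have "\<dots> \<le> 2^a*z" using h(6) by (intro mult_right_mono) auto
    finally have lt: "y + t*z < 2^a*z" .
    have g: "gcd x (gcd (y + t*z) (2^a*z)) = 1"
    proof -
      let ?e = "gcd x (gcd (y + t*z) (2^a*z))"
      have ex: "?e dvd x" and e1: "?e dvd y + t*z" and e2: "?e dvd 2^a*z"
        by (meson dvd_trans gcd_dvd1 gcd_dvd2)+
      have "odd ?e" using ex ox by (metis dvd_trans)
      then have "coprime ?e (2^a)" by simp
      then have ez: "?e dvd z" using e2 by (simp add: coprime_dvd_mult_right_iff)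
      then have "?e dvd t*z" by simp
      then have ey: "?e dvd y" using e1 by (simp add: dvd_add_left_iff)
      have "?e dvd gcd x (gcd y z)" using ex ey ez by simp
      then show ?thesis using h(5) by simp
    qed
    have "x * (2^a*z) = m" using h(3) mab by (simp add: algebra_simps)
    then show ?thesis unfolding u F_def M1n_def using h lt g ox by simp
  qed
  have inj: "inj_on F (Mn b \<times> {..<2^a})"
  proof (rule inj_onI)
    fix u u' assume uu: "u \<in> Mn b \<times> {..<2^a}" "u' \<in> Mn b \<times> {..<2^a}" "F u = F u'"
    obtain x y z t where u: "u = ((x,y,z),t)" by (metis prod.exhaust)
    obtain x' y' z' t' where u': "u' = ((x',y',z'),t')" by (metis prod.exhaust)
    have h: "y < z" "z > 0" using uu(1) unfolding u Mn_def by auto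
    have h': "y' < z'" using uu(2) unfolding u' Mn_def by auto
    have e: "x = x'" "y + t*z = y' + t'*z'" "2^a*z = 2^a*z'" using uu(3) unfolding u u' F_def by auto
    then have zz: "z = z'" by simp
    have "y = (y + t*z) mod z" using h by simp
    also have "\<dots> = (y' + t'*z) mod z" using e(2) zz by simp
    also have "\<dots> = y'" using h' zz by simp
    finally have yy: "y = y'" .
    have "t = (y + t*z) div z" using h by simp
    also have "\<dots> = (y' + t'*z) div z" using e(2) zz by simp
    also have "\<dots> = t'" using h' zz by simp
    finally have "t = t'" .
    then show "u = u'" unfolding u u' using e(1) yy zz by simp
  qed
  have surj: "M1n m \<subseteq> F ` (Mn b \<times> {..<2^a})"
  proof
    fix w assume "w \<in> M1n m"
    then obtain X Y Z where w: "w = (X,Y,Z)" "X > 0" "Z > 0" "X*Z = m" "Y < Z" "gcd X (gcd Y Z) = 1" "odd X"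
      unfolding M1n_def by auto
    have "coprime X (2^a)" using w(7) by simp
    moreover have "X dvd 2^a * b" using w(4) mab by (metis dvd_triv_left)
    ultimately have "X dvd b" by (simp add: coprime_dvd_mult_right_iff)
    then obtain z where bz: "b = X*z" by blast
    have z0: "z > 0" using bz b0 by (cases z) auto
    have "X*Z = X*(2^a*z)" using w(4) mab bz by (simp add: algebra_simps)
    then have Zz: "Z = 2^a*z" using w(2) by simp
    define y where "y = Y mod z"
    define t where "t = Y div z"
    have Yyt: "Y = y + t*z" unfolding y_def t_def by simp
    have t2: "t < 2^a" unfolding t_def using w(5) Zz z0 by (simp add: div_less_iff_less_mult)
    have yz: "y < z" unfolding y_def using z0 by simp
    have g: "gcd X (gcd y z) = 1"
    proof -
      let ?e = "gcd X (gcd y z)"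
      have ex: "?e dvd X" and ey: "?e dvd y" and ez: "?e dvd z"
        by (meson dvd_trans gcd_dvd1 gcd_dvd2)+
      have "?e dvd Y" unfolding Yyt using ey ez by simp
      moreover have "?e dvd Z" unfolding Zz using ez by simp
      ultimately have "?e dvd gcd X (gcd Y Z)" using ex by simp
      then show ?thesis using w(6) by simp
    qed
    have "((X,y,z),t) \<in> Mn b \<times> {..<2^a}" unfolding Mn_def using w(2) z0 bz yz g t2 by simp
    moreover have "F ((X,y,z),t) = w" unfolding F_def w(1) Yyt Zz by simp
    ultimately show "w \<in> F ` (Mn b \<times> {..<2^a})" by (metis image_eqI)
  qed
  have "F ` (Mn b \<times> {..<2^a}) = M1n m" using into surj by blast
  then have "card (M1n m) = card (Mn b \<times> {..<(2::nat)^a})" using card_image[OF inj] by simp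
  then show ?thesis by (simp add: card_cartesian_product)
qed



lemma gcd3_one_iff:
  fixes x y z :: nat
  shows "gcd x (gcd y z) = 1 \<longleftrightarrow> (\<forall>p. prime p \<longrightarrow> \<not> (p dvd x \<and> p dvd y \<and> p dvd z))"
proof
  assume g: "gcd x (gcd y z) = 1"
  show "\<forall>p. prime p \<longrightarrow> \<not> (p dvd x \<and> p dvd y \<and> p dvd z)"
  proof (intro allI impI notI)
    fix p :: nat assume "prime p" "p dvd x \<and> p dvd y \<and> p dvd z"
    then have "p dvd gcd x (gcd y z)" by simp
    then show False using g \<open>prime p\<close> by simp
  qed
next
  assume h: "\<forall>p. prime p \<longrightarrow> \<not> (p dvd x \<and> p dvd y \<and> p dvd z)"
  show "gcd x (gcd y z) = 1"
  proof (rule ccontr)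
    assume "gcd x (gcd y z) \<noteq> 1"
    then obtain p where p: "prime p" "p dvd gcd x (gcd y z)" using prime_factor_nat by blast
    then have "p dvd x \<and> p dvd y \<and> p dvd z" by (meson dvd_trans gcd_dvd1 gcd_dvd2)
    then show False using h p(1) by blast
  qed
qed

definition crt :: "nat \<Rightarrow> nat \<Rightarrow> nat \<Rightarrow> nat \<Rightarrow> nat" where
  "crt z1 z2 y1 y2 = (THE y. y < z1*z2 \<and> [y = y1] (mod z1) \<and> [y = y2] (mod z2))"

lemma crt_prop:
  assumes "coprime z1 z2" "z1 > 0" "z2 > 0"
  shows "crt z1 z2 y1 y2 < z1*z2 \<and> [crt z1 z2 y1 y2 = y1] (mod z1) \<and> [crt z1 z2 y1 y2 = y2] (mod z2)"
  unfolding crt_def by (rule theI') (rule binary_chinese_remainder_unique_nat, use assms in auto)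

lemma crt_eq:
  assumes "coprime z1 z2" "z1 > 0" "z2 > 0" "y < z1*z2" "[y = y1] (mod z1)" "[y = y2] (mod z2)"
  shows "crt z1 z2 y1 y2 = y"
  unfolding crt_def
  by (rule the1_equality) (rule binary_chinese_remainder_unique_nat, use assms in auto)

lemma piece:
  fixes p x1 n q z1 z2 y y1 :: nat
  assumes "prime p" "p dvd x1" "x1 dvd n" "coprime n q" "z2 dvd q" "p dvd z1*z2" "p dvd y"
    "y mod z1 = y1" "gcd x1 (gcd y1 z1) = 1"
  shows False
proof -
  have pn: "p dvd n" using assms(2,3) by (rule dvd_trans)
  have "\<not> p dvd z2"
  proof
    assume "p dvd z2"
    then have "p dvd q" using assms(5) by (rule dvd_trans)
    then have "p dvd gcd n q" using pn by simp
    then show False using assms(1,4) by simp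
  qed
  then have pz1: "p dvd z1" using assms(1,6) by (simp add: prime_dvd_mult_iff)
  then have "p dvd y mod z1" using assms(7) by (simp add: dvd_mod)
  then have "p dvd y1" using assms(8) by simp
  then have "p dvd gcd x1 (gcd y1 z1)" using assms(2) pz1 by simp
  then show False using assms(1,9) by simp
qed

lemma uniq_dec:
  fixes a1 a2 a1' a2' n q :: nat
  assumes "a1 dvd n" "a1' dvd n" "a2 dvd q" "a2' dvd q" "coprime n q" "a1*a2 = a1'*a2'" "a1 > 0" "a1' > 0"
  shows "a1 = a1' \<and> a2 = a2'"
proof -
  have "coprime a1 a2'" using assms(1,4,5) by (rule coprime_divisors)
  moreover have "a1 dvd a1'*a2'" using assms(6) by (metis dvd_triv_left)
  ultimately have d1: "a1 dvd a1'" by (simp add: coprime_dvd_mult_left_iff)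
  have "coprime a1' a2" using assms(2,3,5) by (rule coprime_divisors)
  moreover have "a1' dvd a1*a2" using assms(6) by (metis dvd_triv_left)
  ultimately have d2: "a1' dvd a1" by (simp add: coprime_dvd_mult_left_iff)
  have "a1 = a1'" using d1 d2 by (rule dvd_antisym)
  then show ?thesis using assms(6,7) by simp
qed

lemma Mn_mult:
  fixes n q :: nat
  assumes cop: "coprime n q" and n0: "n > 0" and q0: "q > 0"
  shows "card (Mn (n*q)) = card (Mn n) * card (Mn q)"
proof -
  define G :: "(nat \<times> nat \<times> nat) \<times> (nat \<times> nat \<times> nat) \<Rightarrow> nat \<times> nat \<times> nat" where
    "G = (\<lambda>((x1,y1,z1),(x2,y2,z2)). (x1*x2, crt z1 z2 y1 y2, z1*z2))"
  have into: "G u \<in> Mn (n*q)" if "u \<in> Mn n \<times> Mn q" for u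
  proof -
    obtain x1 y1 z1 x2 y2 z2 where u: "u = ((x1,y1,z1),(x2,y2,z2))" by (metis prod.exhaust)
    have h1: "x1 > 0" "z1 > 0" "x1*z1 = n" "y1 < z1" "gcd x1 (gcd y1 z1) = 1"
      using that unfolding u Mn_def by auto
    have h2: "x2 > 0" "z2 > 0" "x2*z2 = q" "y2 < z2" "gcd x2 (gcd y2 z2) = 1"
      using that unfolding u Mn_def by auto
    have x1n: "x1 dvd n" "z1 dvd n" using h1(3) by (metis dvd_triv_left dvd_triv_right)+
    have x2q: "x2 dvd q" "z2 dvd q" using h2(3) by (metis dvd_triv_left dvd_triv_right)+
    have cz: "coprime z1 z2" using x1n(2) x2q(2) cop by (rule coprime_divisors)
    define y where "y = crt z1 z2 y1 y2"
    have yp: "y < z1*z2" "[y = y1] (mod z1)" "[y = y2] (mod z2)"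
      unfolding y_def using crt_prop[OF cz h1(2) h2(2)] by auto
    have ym1: "y mod z1 = y1" using yp(2) h1(4) by (simp add: cong_def)
    have ym2: "y mod z2 = y2" using yp(3) h2(4) by (simp add: cong_def)
    have g: "gcd (x1*x2) (gcd y (z1*z2)) = 1"
      unfolding gcd3_one_iff
    proof (intro allI impI notI)
      fix p :: nat assume p: "prime p" "p dvd x1*x2 \<and> p dvd y \<and> p dvd z1*z2"
      then have "p dvd x1 \<or> p dvd x2" by (simp add: prime_dvd_mult_iff)
      then show False
      proof
        assume "p dvd x1"
        then show False using piece[OF p(1) _ x1n(1) cop x2q(2) _ _ ym1 h1(5)] p(2) by blast
      next
        assume "p dvd x2"
        moreover have "p dvd z2*z1" using p(2) by (simp add: mult.commute)
        ultimately show False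
          using piece[OF p(1) _ x2q(1) cop[unfolded coprime_commute[of n]] x1n(2) _ _ ym2 h2(5)] p(2) by blast
      qed
    qed
    have "x1*x2*(z1*z2) = n*q" using h1(3) h2(3) by (simp add: algebra_simps)
    then show ?thesis unfolding u G_def Mn_def using h1 h2 yp(1) g y_def by simp
  qed
  have inj: "inj_on G (Mn n \<times> Mn q)"
  proof (rule inj_onI)
    fix u u' assume uu: "u \<in> Mn n \<times> Mn q" "u' \<in> Mn n \<times> Mn q" "G u = G u'"
    obtain x1 y1 z1 x2 y2 z2 where u: "u = ((x1,y1,z1),(x2,y2,z2))" by (metis prod.exhaust)
    obtain x1' y1' z1' x2' y2' z2' where u': "u' = ((x1',y1',z1'),(x2',y2',z2'))" by (metis prod.exhaust)
    have h1: "x1 > 0" "z1 > 0" "x1*z1 = n" "y1 < z1" and h2: "x2 > 0" "z2 > 0" "x2*z2 = q" "y2 < z2"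
      using uu(1) unfolding u Mn_def by auto
    have h1': "x1' > 0" "z1' > 0" "x1'*z1' = n" "y1' < z1'" and h2': "x2' > 0" "z2' > 0" "x2'*z2' = q" "y2' < z2'"
      using uu(2) unfolding u' Mn_def by auto
    have e: "x1*x2 = x1'*x2'" "crt z1 z2 y1 y2 = crt z1' z2' y1' y2'" "z1*z2 = z1'*z2'"
      using uu(3) unfolding u u' G_def by auto
    have xx: "x1 = x1' \<and> x2 = x2'"
      by (rule uniq_dec[OF _ _ _ _ cop e(1) h1(1) h1'(1)])
         (use h1(3) h1'(3) h2(3) h2'(3) in \<open>metis dvd_triv_left dvd_triv_right\<close>)+
    have zz: "z1 = z1' \<and> z2 = z2'"
      by (rule uniq_dec[OF _ _ _ _ cop e(3) h1(2) h1'(2)])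
         (use h1(3) h1'(3) h2(3) h2'(3) in \<open>metis dvd_triv_left dvd_triv_right\<close>)+
    have cz: "coprime z1 z2" using cop h1(3) h2(3) by (metis coprime_divisors dvd_triv_right)
    have p: "[crt z1 z2 y1 y2 = y1] (mod z1)" "[crt z1 z2 y1 y2 = y2] (mod z2)"
      using crt_prop[OF cz h1(2) h2(2)] by auto
    have p': "[crt z1 z2 y1' y2' = y1'] (mod z1)" "[crt z1 z2 y1' y2' = y2'] (mod z2)"
      using crt_prop[OF cz h1(2) h2(2)] by auto
    have e2: "crt z1 z2 y1 y2 = crt z1 z2 y1' y2'" using e(2) zz by simp
    have "y1 = y1'" using p(1) p'(1) e2 h1(4) h1'(4) zz by (simp add: cong_def)
    moreover have "y2 = y2'" using p(2) p'(2) e2 h2(4) h2'(4) zz by (simp add: cong_def)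
    ultimately show "u = u'" unfolding u u' using xx zz by simp
  qed
  have surj: "Mn (n*q) \<subseteq> G ` (Mn n \<times> Mn q)"
  proof
    fix w assume "w \<in> Mn (n*q)"
    then obtain x y z where w: "w = (x,y,z)" "x > 0" "z > 0" "x*z = n*q" "y < z" "gcd x (gcd y z) = 1"
      unfolding Mn_def by auto
    have xnq: "x dvd n*q" using w(4) by (metis dvd_triv_left)
    have znq: "z dvd n*q" using w(4) by (metis dvd_triv_right)
    obtain x1 x2 where xd: "x = x1*x2" "x1 dvd n" "x2 dvd q"
      using division_decomp[OF xnq] by blast
    obtain z1 z2 where zd: "z = z1*z2" "z1 dvd n" "z2 dvd q"
      using division_decomp[OF znq] by blast
    have pos: "x1 > 0" "x2 > 0" "z1 > 0" "z2 > 0" using xd(1) zd(1) w(2,3) by auto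
    have prod: "(x1*z1)*(x2*z2) = n*q" using w(4) xd(1) zd(1) by (simp add: algebra_simps)
    have cop': "coprime q n" using cop by (simp add: coprime_commute)
    have c1: "coprime n (x2*z2)"
      using coprime_divisors[OF dvd_refl xd(3) cop] coprime_divisors[OF dvd_refl zd(3) cop] by simp
    have c2: "coprime q (x1*z1)"
      using coprime_divisors[OF dvd_refl xd(2) cop'] coprime_divisors[OF dvd_refl zd(2) cop'] by simp
    have "n dvd (x1*z1)*(x2*z2)" using prod by simp
    then have "n dvd x1*z1" using c1 by (simp add: coprime_dvd_mult_left_iff)
    then obtain k where k: "x1*z1 = n*k" by blast
    have "q dvd (x2*z2)*(x1*z1)" using prod by (simp add: mult.commute)
    then have "q dvd x2*z2" using c2 by (simp add: coprime_dvd_mult_left_iff)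
    then obtain l where l: "x2*z2 = q*l" by blast
    have "n*q*(k*l) = n*q*1" using prod k l by (simp add: algebra_simps)
    then have "k*l = 1" using n0 q0 by simp
    then have kl: "k = 1" "l = 1" by simp_all
    have cz: "coprime z1 z2" using zd(2,3) cop by (rule coprime_divisors)
    define y1 where "y1 = y mod z1"
    define y2 where "y2 = y mod z2"
    have g1: "gcd x1 (gcd y1 z1) = 1" unfolding gcd3_one_iff
    proof (intro allI impI notI)
      fix p :: nat assume p: "prime p" "p dvd x1 \<and> p dvd y1 \<and> p dvd z1"
      have "p dvd y" using dvd_mod_imp_dvd[of p y z1] p(2) unfolding y1_def by blast
      moreover have "p dvd x" "p dvd z" using p(2) xd(1) zd(1) by simp_all
      ultimately have "p dvd gcd x (gcd y z)" by simp
      then show False using w(6) p(1) by simp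
    qed
    have g2: "gcd x2 (gcd y2 z2) = 1" unfolding gcd3_one_iff
    proof (intro allI impI notI)
      fix p :: nat assume p: "prime p" "p dvd x2 \<and> p dvd y2 \<and> p dvd z2"
      have "p dvd y" using dvd_mod_imp_dvd[of p y z2] p(2) unfolding y2_def by blast
      moreover have "p dvd x" "p dvd z" using p(2) xd(1) zd(1) by simp_all
      ultimately have "p dvd gcd x (gcd y z)" by simp
      then show False using w(6) p(1) by simp
    qed
    have m1: "(x1,y1,z1) \<in> Mn n" unfolding Mn_def using pos k kl g1 y1_def by simp
    have m2: "(x2,y2,z2) \<in> Mn q" unfolding Mn_def using pos l kl g2 y2_def by simp
    have "crt z1 z2 y1 y2 = y"
      by (rule crt_eq[OF cz pos(3,4)]) (use w(5) zd(1) in \<open>simp_all add: y1_def y2_def cong_def\<close>)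
    then have "G ((x1,y1,z1),(x2,y2,z2)) = w" unfolding G_def w(1) xd(1) zd(1) by simp
    moreover have "((x1,y1,z1),(x2,y2,z2)) \<in> Mn n \<times> Mn q" using m1 m2 by simp
    ultimately show "w \<in> G ` (Mn n \<times> Mn q)" by (metis image_eqI)
  qed
  have "G ` (Mn n \<times> Mn q) = Mn (n*q)" using into surj by blast
  then have "card (Mn (n*q)) = card (Mn n \<times> Mn q)" using card_image[OF inj] by simp
  then show ?thesis by (simp add: card_cartesian_product)
qed



lemma tele:
  fixes f :: "nat \<Rightarrow> nat"
  assumes "m \<le> n" "\<And>i j. i \<le> j \<Longrightarrow> f j \<le> f i"
  shows "(\<Sum>i\<in>{m..<n}. f i - f (Suc i)) = f m - f n"
  using assms(1)
proof (induction n rule: dec_induct)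
  case base then show ?case by simp
next
  case (step n)
  have "f (Suc n) \<le> f n" "f n \<le> f m" using assms(2) step.hyps(1) by auto
  then show ?case using step by simp
qed

lemma card_nondvd:
  fixes p j :: nat
  assumes p: "prime p" and j: "j \<ge> 1"
  shows "card {y. y < p^j \<and> \<not> p dvd y} = p^j - p^(j-1)"
proof -
  have p0: "p > 0" using p prime_gt_0_nat by blast
  have pj: "p^j = p * p^(j-1)" using j by (metis Suc_diff_1 less_le_trans zero_less_one power_Suc)
  let ?A = "{y. y < p^j \<and> \<not> p dvd y}" and ?B = "{y. y < p^j \<and> p dvd y}"
  have B: "?B = (\<lambda>w. p*w) ` {..<p^(j-1)}"
  proof
    show "?B \<subseteq> (\<lambda>w. p*w) ` {..<p^(j-1)}"
    proof
      fix y assume "y \<in> ?B"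
      then obtain w where w: "y = p*w" "p*w < p*p^(j-1)" using pj by auto
      then have "w < p^(j-1)" by simp
      then show "y \<in> (\<lambda>w. p*w) ` {..<p^(j-1)}" using w(1) by auto
    qed
  next
    show "(\<lambda>w. p*w) ` {..<p^(j-1)} \<subseteq> ?B" using pj p0 by auto
  qed
  have cB: "card ?B = p^(j-1)" unfolding B using p0 by (subst card_image) (auto simp: inj_on_def)
  have "?A \<union> ?B = {..<p^j}" by auto
  moreover have "?A \<inter> ?B = {}" by auto
  ultimately have "card ?A + card ?B = p^j" using card_Un_disjoint[of ?A ?B] by simp
  then show ?thesis using cB by simp
qed

lemma Y_mid:
  fixes p i k y :: nat
  assumes p: "prime p" and i: "0 < i" "i < k"
  shows "gcd (p^i) (gcd y (p^(k-i))) = 1 \<longleftrightarrow> \<not> p dvd y"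
proof
  assume g: "gcd (p^i) (gcd y (p^(k-i))) = 1"
  show "\<not> p dvd y"
  proof
    assume "p dvd y"
    moreover have "p dvd p^i" "p dvd p^(k-i)" using i by (simp_all add: dvd_power)
    ultimately have "p dvd gcd (p^i) (gcd y (p^(k-i)))" by simp
    then show False using g p by simp
  qed
next
  assume ny: "\<not> p dvd y"
  show "gcd (p^i) (gcd y (p^(k-i))) = 1" unfolding gcd3_one_iff
  proof (intro allI impI notI)
    fix r :: nat assume r: "prime r" "r dvd p^i \<and> r dvd y \<and> r dvd p^(k-i)"
    then have "r dvd p" using prime_dvd_power by blast
    then have "r = p" using r(1) p by (simp add: primes_dvd_imp_eq)
    then show False using r(2) ny by simp
  qed
qed

lemma card_Mn_pp:
  fixes p k :: nat
  assumes p: "prime p" and k: "k \<ge> 1"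
  shows "card (Mn (p^k)) = p^k + p^(k-1)"
proof -
  have p1: "p > 1" using p prime_gt_1_nat by blast
  define Y where "Y i = {y. y < p^(k-i) \<and> gcd (p^i) (gcd y (p^(k-i))) = 1}" for i
  define F :: "nat \<times> nat \<Rightarrow> nat \<times> nat \<times> nat" where "F = (\<lambda>(i,y). (p^i, y, p^(k-i)))"
  have eq: "Mn (p^k) = F ` (SIGMA i:{..k}. Y i)"
  proof
    show "Mn (p^k) \<subseteq> F ` (SIGMA i:{..k}. Y i)"
    proof
      fix w assume "w \<in> Mn (p^k)"
      then obtain x y z where w: "w = (x,y,z)" "x > 0" "z > 0" "x*z = p^k" "y < z" "gcd x (gcd y z) = 1"
        unfolding Mn_def by auto
      have "x dvd p^k" using w(4) by (metis dvd_triv_left)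
      then obtain i where i: "i \<le> k" "x = p^i" using divides_primepow_nat[OF p] by blast
      have "p^i * z = p^i * p^(k-i)" using w(4) i by (simp add: power_add[symmetric])
      then have z: "z = p^(k-i)" using p1 by simp
      have "(i,y) \<in> (SIGMA i:{..k}. Y i)" unfolding Y_def using i z w by simp
      moreover have "F (i,y) = w" unfolding F_def w(1) i(2) z by simp
      ultimately show "w \<in> F ` (SIGMA i:{..k}. Y i)" by (metis image_eqI)
    qed
  next
    show "F ` (SIGMA i:{..k}. Y i) \<subseteq> Mn (p^k)"
    proof
      fix w assume "w \<in> F ` (SIGMA i:{..k}. Y i)"
      then obtain i y where iy: "i \<le> k" "y \<in> Y i" "w = F (i,y)" by auto
      have "p^i * p^(k-i) = p^k" using iy(1) by (simp add: power_add[symmetric])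
      then show "w \<in> Mn (p^k)" using iy p1 unfolding F_def Y_def Mn_def by simp
    qed
  qed
  have inj: "inj_on F (SIGMA i:{..k}. Y i)"
    using p1 by (auto simp: inj_on_def F_def)
  have finY: "finite (Y i)" for i unfolding Y_def by simp
  have "card (Mn (p^k)) = (\<Sum>i\<in>{..k}. card (Y i))"
    unfolding eq card_image[OF inj] by (rule card_SigmaI) (auto simp: finY)
  also have "{..k} = insert 0 (insert k {1..<k})" using k by auto
  also have "(\<Sum>i\<in>insert 0 (insert k {1..<k}). card (Y i)) = card (Y 0) + card (Y k) + (\<Sum>i\<in>{1..<k}. card (Y i))"
    using k by simp
  also have "card (Y 0) = p^k" unfolding Y_def by simp
  also have "card (Y k) = 1"
  proof -
    have "Y k = {0}" unfolding Y_def by auto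
    then show ?thesis by simp
  qed
  also have "(\<Sum>i\<in>{1..<k}. card (Y i)) = (\<Sum>i\<in>{1..<k}. p^(k-i) - p^(k - Suc i))"
  proof (rule sum.cong)
    fix i assume "i \<in> {1..<k}"
    then have i: "0 < i" "i < k" by auto
    have "Y i = {y. y < p^(k-i) \<and> \<not> p dvd y}" unfolding Y_def using Y_mid[OF p i] by auto
    then have "card (Y i) = p^(k-i) - p^(k-i-1)" using card_nondvd[OF p, of "k-i"] i by simp
    then show "card (Y i) = p^(k-i) - p^(k - Suc i)" by simp
  qed simp
  also have "\<dots> = p^(k-1) - p^(k-k)"
    using tele[of 1 k "\<lambda>i. p^(k-i)"] k p1 by (simp add: power_increasing)
  finally show ?thesis using k p1 by simp
qed

lemma dpsi_pp:
  fixes p k :: nat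
  assumes p: "prime p" and k: "k \<ge> 1"
  shows "dpsi (p^k) = real (p^k + p^(k-1))"
proof -
  have "prime_factors (p^k) = {p}" using p k by (simp add: prime_factorization_prime_power)
  then have "dpsi (p^k) = real (p^k) * (1 + 1 / real p)" unfolding dpsi_def by simp
  also have "\<dots> = real (p^k) + real (p^k) / real p" by (simp add: algebra_simps)
  also have "real (p^k) / real p = real (p^(k-1))"
  proof -
    have "p^k = p * p^(k-1)" using k by (metis Suc_diff_1 less_le_trans zero_less_one power_Suc)
    then show ?thesis using p prime_gt_0_nat[OF p] by simp
  qed
  finally show ?thesis by simp
qed

lemma dpsi_mult:
  fixes n q :: nat
  assumes cop: "coprime n q" and n0: "n > 0" and q0: "q > 0"
  shows "dpsi (n*q) = dpsi n * dpsi q"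
proof -
  have pf: "prime_factors (n*q) = prime_factors n \<union> prime_factors q"
    using n0 q0 by (simp add: prime_factors_product)
  have dj: "prime_factors n \<inter> prime_factors q = {}"
  proof (rule ccontr)
    assume "prime_factors n \<inter> prime_factors q \<noteq> {}"
    then obtain r where r: "r \<in> prime_factors n" "r \<in> prime_factors q" by blast
    then have "prime r" "r dvd n" "r dvd q" by auto
    then have "r dvd gcd n q" by simp
    then show False using cop \<open>prime r\<close> by simp
  qed
  have "(\<Prod>p\<in>prime_factors (n*q). (1 + 1 / real p)) =
        (\<Prod>p\<in>prime_factors n. (1 + 1 / real p)) * (\<Prod>p\<in>prime_factors q. (1 + 1 / real p))"
    unfolding pf by (rule prod.union_disjoint) (simp_all add: dj)
  then show ?thesis unfolding dpsi_def by (simp add: algebra_simps)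
qed

lemma card_Mn_dpsi:
  fixes n :: nat
  assumes "n > 0"
  shows "real (card (Mn n)) = dpsi n"
  using assms
proof (induction n rule: less_induct)
  case (less n)
  show ?case
  proof (cases "n = 1")
    case True
    have "Mn 1 = {(1,0,1)}" unfolding Mn_def by auto
    then show ?thesis using True unfolding dpsi_def by simp
  next
    case False
    then obtain p where p: "prime p" "p dvd n" using prime_factor_nat by blast
    define k where "k = multiplicity p n"
    have n0: "n \<noteq> 0" using less.prems by simp
    have nu: "\<not> is_unit p" using p(1) not_prime_unit by blast
    obtain r where r: "n = p^k * r" "\<not> p dvd r" unfolding k_def by (rule multiplicity_decompose'[OF n0 nu])
    have k1: "k \<ge> 1"
    proof (rule ccontr)
      assume "\<not> k \<ge> 1"
      then have "k = 0" by simp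
      then show False using r p(2) by simp
    qed
    have r0: "r > 0" using r(1) less.prems by (cases r) auto
    have p1: "p > 1" using p prime_gt_1_nat by blast
    have "p^k \<ge> p" using k1 p1 by (metis power_one_right power_increasing less_imp_le)
    then have "r < n" using r(1) r0 p1 by (metis less_le_trans mult_less_cancel2 mult_1 nat_mult_1 linorder_not_le)
    have cop: "coprime (p^k) r" using p(1) r(2) by (simp add: prime_imp_coprime)
    have pk0: "p^k > 0" using p1 by simp
    have "card (Mn n) = card (Mn (p^k)) * card (Mn r)" unfolding r(1) by (rule Mn_mult[OF cop pk0 r0])
    then have "real (card (Mn n)) = real (p^k + p^(k-1)) * real (card (Mn r))"
      using card_Mn_pp[OF p(1) k1] by simp
    also have "\<dots> = dpsi (p^k) * dpsi r" using dpsi_pp[OF p(1) k1] less.IH[OF \<open>r < n\<close> r0] by simp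
    also have "\<dots> = dpsi n" unfolding r(1) by (rule dpsi_mult[OF cop pk0 r0, symmetric])
    finally show ?thesis .
  qed
qed


theorem lemma2p3:
  fixes m a b :: nat
  assumes "a > 0" and "odd b" and "m = 2 ^ a * b"
  shows "real (card (M1 m)) = 2 ^ a * dpsi b \<and>
         2 ^ a * dpsi b =
           real (subgroup_index Gamma0_2 (Gamma0_2 \<inter> conj_by (mat2 1 0 0 (real m)) Gamma0_2_plus))"
proof -
  have b0: "b > 0" using assms(2) by (cases b) auto
  have m0: "m > 0" using b0 assms(3) by simp
  have "card (M1 m) = 2^a * card (Mn b)" using card_M1 A2[OF assms(2) assms(3)] by simp
  then have c: "real (card (M1 m)) = 2 ^ a * dpsi b" using card_Mn_dpsi[OF b0] by simp
  moreover have "real (subgroup_index Gamma0_2 (Gamma0_2 \<inter> conj_by (mat2 1 0 0 (real m)) Gamma0_2_plus)) = real (card (M1 m))"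
    using index_M1[OF m0] by simp
  ultimately show ?thesis by simp
qed

end
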